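(* Let $s$ be a positive integer, $\alpha\in\mathbb{R}$, $\omega(t)=\alpha+t^s$, $0<R<1$, $m_0>0$, and let $$\varphi:\ \xi'=e^{i\omega(\xi\eta)}\xi\,(1+p(\xi,\eta)),\quad \eta'=e^{-i\omega(\xi\eta)}\eta\,(1+p(\xi,\eta))^{-1},$$ where $p$ is a power series starting with terms of order at least $2s+1$, converging on $\Delta_R$, with $\|p\|_R\le m_0$. For a positive integer $n$ put $$d_0=\min\Big\{\frac{R^{2s+1}}{2^{6s+6}m_0},\ \Big(\frac{1}{2n}\Big)^{1/(2s)},\ \frac{R}{16}\Big\}.$$ Then for every $1\le k\le n$ the iterate $\varphi^k$ is defined on $\Delta_{d_0}$ and maps $\Delta_{d_0}$ into $\Delta_{4d_0}$.
   Context: $\Delta_r=\{(\xi,\eta)\in\mathbb{C}^2:|\xi|<r,|\eta|<r\}$ and $\|p\|_R=\max_{|\xi|,|\eta|\le R}|p(\xi,\eta)|$. *)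

theory Defs
  imports "HOL-Analysis.Analysis"
begin

definition bidisc :: "real \<Rightarrow> (complex \<times> complex) set" where
  "bidisc r = {(x, y). norm x < r \<and> norm y < r}"

definition omega :: "real \<Rightarrow> nat \<Rightarrow> complex \<Rightarrow> complex" where
  "omega \<alpha> s t = of_real \<alpha> + t ^ s"

definition phi :: "real \<Rightarrow> nat \<Rightarrow> (complex \<Rightarrow> complex \<Rightarrow> complex)
    \<Rightarrow> complex \<times> complex \<Rightarrow> complex \<times> complex" where
  "phi \<alpha> s p z = (let x = fst z; y = snd z; w = omega \<alpha> s (x * y) in
     (exp (\<i> * w) * x * (1 + p x y), exp (- \<i> * w) * y / (1 + p x y)))"

text \<open>phi is defined at z iff z lies in the domain Delta_R of p and 1 + p(z) is nonzero.
  The iterate phi^k is defined at z iff phi is defined at each of z, phi z, ..., phi^(k-1) z.\<close>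
definition phi_defined_at :: "real \<Rightarrow> (complex \<Rightarrow> complex \<Rightarrow> complex)
    \<Rightarrow> complex \<times> complex \<Rightarrow> bool" where
  "phi_defined_at R p z \<longleftrightarrow> z \<in> bidisc R \<and> 1 + p (fst z) (snd z) \<noteq> 0"

definition iter_defined_at :: "real \<Rightarrow> nat \<Rightarrow> real \<Rightarrow> (complex \<Rightarrow> complex \<Rightarrow> complex)
    \<Rightarrow> nat \<Rightarrow> complex \<times> complex \<Rightarrow> bool" where
  "iter_defined_at \<alpha> s R p k z \<longleftrightarrow>
     (\<forall>j<k. phi_defined_at R p ((phi \<alpha> s p ^^ j) z))"

end

theory Submission
  imports Defs "HOL-Complex_Analysis.Complex_Analysis"
begin

lemma grouped_sums:
  fixes c :: "nat \<Rightarrow> nat \<Rightarrow> complex"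
  assumes "((\<lambda>(i, j). c i j * (t*x) ^ i * (t*y) ^ j) has_sum S) UNIV"
  shows "(\<lambda>k. (\<Sum>i\<le>k. c i (k-i) * x^i * y^(k-i)) * t^k) sums S"
proof -
  define f where "f = (\<lambda>(i, j). c i j * (t*x) ^ i * (t*y) ^ j)"
  define g where "g = (\<lambda>(k::nat, i::nat). (i, k - i))"
  have bij: "bij_betw g (Sigma UNIV (\<lambda>k. {..k})) UNIV"
    unfolding g_def
    by (rule bij_betwI[where g="\<lambda>(i,j). (i+j, i)"]) auto
  have "((\<lambda>z. f (g z)) has_sum S) (Sigma UNIV (\<lambda>k. {..k}))"
    using has_sum_reindex_bij_betw[OF bij, of f S] assms f_def by simp
  then have "((\<lambda>k. \<Sum>i\<le>k. f (g (k, i))) has_sum S) UNIV"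
    by (rule has_sum_SigmaD) auto
  moreover have "(\<Sum>i\<le>k. f (g (k, i))) = (\<Sum>i\<le>k. c i (k-i) * x^i * y^(k-i)) * t^k" for k
    unfolding sum_distrib_right
  proof (rule sum.cong)
    fix i assume "i \<in> {..k}"
    then have "t^k = t^i * t^(k-i)" by (simp add: power_add[symmetric])
    then show "f (g (k, i)) = c i (k-i) * x^i * y^(k-i) * t^k"
      by (simp add: f_def g_def power_mult_distrib)
  qed simp
  ultimately show ?thesis by (simp add: has_sum_imp_sums)
qed

lemma schwarz_bound:
  fixes c :: "nat \<Rightarrow> nat \<Rightarrow> complex" and p :: "complex \<Rightarrow> complex \<Rightarrow> complex"
  assumes order: "\<And>i j. i + j < N \<Longrightarrow> c i j = 0" and N: "N > 0"
    and series: "\<And>x y. norm x < R \<Longrightarrow> norm y < R \<Longrightarrow>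
        ((\<lambda>(i, j). c i j * x ^ i * y ^ j) has_sum p x y) UNIV"
    and bound: "\<And>x y. norm x < R \<Longrightarrow> norm y < R \<Longrightarrow> norm (p x y) \<le> m0"
    and rho: "\<rho> > 0" "norm x \<le> \<rho>" "norm y \<le> \<rho>" "1 < r" "r * \<rho> < R"
  shows "norm (p x y) \<le> m0 / r ^ N"
proof -
  define r2 where "r2 = R / \<rho>"
  have rr2: "r < r2" using rho unfolding r2_def by (simp add: field_simps)
  define a where "a k = (\<Sum>i\<le>k. c i (k-i) * x^i * y^(k-i))" for k
  have small: "norm (t*x) < R \<and> norm (t*y) < R" if "norm t < r2" for t
  proof -
    have "norm t * \<rho> < R" using that rho unfolding r2_def by (simp add: field_simps)
    moreover have "norm t * norm x \<le> norm t * \<rho>" "norm t * norm y \<le> norm t * \<rho>"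
      using rho by (simp_all add: mult_left_mono)
    ultimately show ?thesis by (simp add: norm_mult)
  qed
  have sumsg: "(\<lambda>k. a k * t^k) sums p (t*x) (t*y)" if "norm t < r2" for t
    unfolding a_def using small[OF that] by (intro grouped_sums series) auto
  have a0: "a k = 0" if "k < N" for k
    unfolding a_def using that by (intro sum.neutral) (auto intro: order)
  define h where "h t = (\<Sum>k. a (k+N) * t^k)" for t
  have hs: "(\<lambda>k. a (k+N) * t^k) sums h t \<and> p (t*x) (t*y) = t^N * h t" if "norm t < r2" for t
  proof (cases "t = 0")
    case True
    have "(\<lambda>k. a (k+N) * t^k) sums a N" using True powser_sums_zero[of "\<lambda>k. a (k+N)"] by simp
    then have 1: "(\<lambda>k. a (k+N) * t^k) sums h t" unfolding h_def by (simp add: sums_iff)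
    have "p (t*x) (t*y) = a 0" using sumsg[OF that] True powser_sums_zero[of a]
      using sums_unique2 by fastforce
    then show ?thesis using 1 True a0 N by simp
  next
    case False
    have z: "(\<Sum>i<N. a i * t^i) = 0" using a0 by simp
    have "(\<lambda>k. a (k+N) * t^(k+N)) sums (p (t*x) (t*y) + (\<Sum>i<N. a i * t^i))"
      using sumsg[OF that] z by (intro sums_iff_shift[of "\<lambda>k. a k * t^k" N, THEN iffD2]) simp
    then have "(\<lambda>k. a (k+N) * t^(k+N) / t^N) sums (p (t*x) (t*y) / t^N)"
      using z by (intro sums_divide) simp
    moreover have "a (k+N) * t^(k+N) / t^N = a (k+N) * t^k" for k
      using False by (simp add: power_add)
    ultimately have 2: "(\<lambda>k. a (k+N) * t^k) sums (p (t*x) (t*y) / t^N)" by simp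
    then have "h t = p (t*x) (t*y) / t^N" unfolding h_def by (simp add: sums_iff)
    then show ?thesis using 2 False by simp
  qed
  have holo: "h holomorphic_on ball 0 r2"
    by (rule power_series_holomorphic[where a="\<lambda>k. a (k+N)"]) (use hs in auto)
  have "norm (h 1) \<le> m0 / r ^ N"
  proof (rule maximum_modulus_frontier[where S="cball 0 r" and f=h and \<xi>=1])
    show "h holomorphic_on interior (cball 0 r)"
      using holo rr2 by (auto intro: holomorphic_on_subset)
    show "continuous_on (closure (cball 0 r)) h"
      using holo rr2 by (auto intro!: holomorphic_on_imp_continuous_on intro: holomorphic_on_subset)
    show "bounded (cball (0::complex) r)" by simp
    show "(1::complex) \<in> cball 0 r" using rho by simp
    fix z :: complex assume "z \<in> frontier (cball 0 r)"
    then have z: "norm z = r" by simp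
    then have "norm z < r2" using rr2 by simp
    then have "p (z*x) (z*y) = z^N * h z" "norm (p (z*x) (z*y)) \<le> m0"
      using hs small[of z] bound[of "z*x" "z*y"] by auto
    then have "r^N * norm (h z) \<le> m0" using z by (simp add: norm_mult norm_power)
    then show "norm (h z) \<le> m0 / r ^ N" using rho by (simp add: field_simps)
  qed
  moreover have "p x y = h 1" using hs[of 1] rr2 rho by simp
  ultimately show ?thesis by simp
qed

lemma phi_step:
  fixes x y :: complex
  assumes pd: "norm (p x y) \<le> \<delta>" and d2: "\<delta> \<le> 1/2" and ep: "norm ((x*y)^s) \<le> \<epsilon>"
  shows "fst (phi \<alpha> s p (x,y)) * snd (phi \<alpha> s p (x,y)) = x*y"
   "norm (fst (phi \<alpha> s p (x,y))) \<le> norm x * exp (\<epsilon> + \<delta>)"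
   "norm (snd (phi \<alpha> s p (x,y))) \<le> norm y * exp (\<epsilon> + 2*\<delta>)"
proof -
  define w where "w = omega \<alpha> s (x*y)"
  have Imw: "Im w = Im ((x*y)^s)" unfolding w_def omega_def by simp
  have e1: "norm (exp (\<i> * w)) \<le> exp \<epsilon>"
  proof -
    have "- Im w \<le> \<epsilon>" using Imw abs_Im_le_cmod[of "(x*y)^s"] ep by linarith
    then show ?thesis by simp
  qed
  have e2: "norm (exp (- \<i> * w)) \<le> exp \<epsilon>"
  proof -
    have "Im w \<le> \<epsilon>" using Imw abs_Im_le_cmod[of "(x*y)^s"] ep by linarith
    then show ?thesis by simp
  qed
  have n1: "norm (1 + p x y) \<le> exp \<delta>"
  proof -
    have "norm (1 + p x y) \<le> 1 + \<delta>" using norm_triangle_ineq[of 1 "p x y"] pd by simp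
    also have "\<dots> \<le> exp \<delta>" by simp
    finally show ?thesis .
  qed
  have lo: "norm (1 + p x y) \<ge> 1 - \<delta>"
    using norm_triangle_ineq2[of 1 "- p x y"] pd by (simp add: norm_minus_commute)
  then have nz: "1 + p x y \<noteq> 0" using d2 by auto
  have n2: "norm (1 / (1 + p x y)) \<le> exp (2*\<delta>)"
  proof -
    have dpos: "1 - \<delta> > 0" using d2 by simp
    have "norm (1 / (1 + p x y)) = 1 / norm (1 + p x y)" by (simp add: norm_divide)
    also have "\<dots> \<le> 1 / (1 - \<delta>)" using lo dpos by (intro divide_left_mono) (auto intro!: mult_pos_pos)
    also have "\<dots> \<le> 1 + 2*\<delta>"
    proof -
      have "0 \<le> \<delta>" using pd norm_ge_zero order_trans by blast
      then have "1 \<le> (1 + 2*\<delta>) * (1 - \<delta>)" using d2 by (simp add: algebra_simps) (metis mult_left_mono mult_1_right)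
      then show ?thesis using dpos by (simp add: field_simps)
    qed
    also have "\<dots> \<le> exp (2*\<delta>)" using exp_ge_add_one_self[of "2*\<delta>"] by simp
    finally show ?thesis .
  qed
  have ph: "phi \<alpha> s p (x,y) = (exp (\<i> * w) * x * (1 + p x y), exp (- \<i> * w) * y / (1 + p x y))"
    unfolding phi_def w_def Let_def by simp
  have "exp (\<i> * w) * exp (- \<i> * w) = 1" by (simp add: exp_minus)
  then show "fst (phi \<alpha> s p (x,y)) * snd (phi \<alpha> s p (x,y)) = x*y"
    unfolding ph using nz by (simp add: field_simps)
  have "norm (fst (phi \<alpha> s p (x,y))) = norm (exp (\<i> * w)) * norm x * norm (1 + p x y)"
    unfolding ph by (simp add: norm_mult)
  also have "\<dots> \<le> exp \<epsilon> * norm x * exp \<delta>"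
    using e1 n1 by (intro mult_mono) auto
  also have "\<dots> = norm x * exp (\<epsilon> + \<delta>)" by (simp add: exp_add)
  finally show "norm (fst (phi \<alpha> s p (x,y))) \<le> norm x * exp (\<epsilon> + \<delta>)" .
  have "norm (snd (phi \<alpha> s p (x,y))) = norm (exp (- \<i> * w)) * norm y * norm (1 / (1 + p x y))"
    unfolding ph by (simp add: norm_mult norm_divide)
  also have "\<dots> \<le> exp \<epsilon> * norm y * exp (2*\<delta>)"
    using e2 n2 by (intro mult_mono) auto
  also have "\<dots> = norm y * exp (\<epsilon> + 2*\<delta>)" by (simp add: exp_add)
  finally show "norm (snd (phi \<alpha> s p (x,y))) \<le> norm y * exp (\<epsilon> + 2*\<delta>)" .
qed

theorem lemma3p1:
  fixes s n :: nat and \<alpha> R m0 :: real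
    and c :: "nat \<Rightarrow> nat \<Rightarrow> complex"
    and p :: "complex \<Rightarrow> complex \<Rightarrow> complex"
  assumes "s > 0" and "n > 0"
    and "0 < R" and "R < 1" and "m0 > 0"
    and order: "\<And>i j. i + j < 2 * s + 1 \<Longrightarrow> c i j = 0"
    and series: "\<And>x y. norm x < R \<Longrightarrow> norm y < R \<Longrightarrow>
        ((\<lambda>(i, j). c i j * x ^ i * y ^ j) has_sum p x y) UNIV"
    and bound: "\<And>x y. norm x < R \<Longrightarrow> norm y < R \<Longrightarrow> norm (p x y) \<le> m0"
  shows "let d0 = Min {R ^ (2 * s + 1) / (2 ^ (6 * s + 6) * m0),
                       (1 / (2 * real n)) powr (1 / (2 * real s)),
                       R / 16}
         in \<forall>k. 1 \<le> k \<and> k \<le> n \<longrightarrow>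
              (\<forall>z \<in> bidisc d0. iter_defined_at \<alpha> s R p k z \<and>
                                 (phi \<alpha> s p ^^ k) z \<in> bidisc (4 * d0))"
proof -
  define N where "N = 2 * s + 1"
  define A where "A = R ^ (2 * s + 1) / (2 ^ (6 * s + 6) * m0)"
  define B where "B = (1 / (2 * real n)) powr (1 / (2 * real s))"
  define C where "C = R / 16"
  define d where "d = Min {A, B, C}"
  have dm: "d = min A (min B C)" unfolding d_def by simp
  have Apos: "A > 0" unfolding A_def using assms by simp
  have Bpos: "B > 0" unfolding B_def using assms by simp
  have Cpos: "C > 0" unfolding C_def using assms by simp
  have dpos: "d > 0" and dA: "d \<le> A" and dB: "d \<le> B" and dC: "d \<le> C"
    using Apos Bpos Cpos dm by auto
  have d2s: "d ^ (2 * s) \<le> 1 / (2 * real n)"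
  proof -
    have "d ^ (2 * s) \<le> B ^ (2 * s)" using dpos dB by (intro power_mono) auto
    also have "B ^ (2 * s) = B powr real (2 * s)" using Bpos by (rule powr_realpow[symmetric])
    also have "\<dots> = (1 / (2 * real n)) powr (1 / (2 * real s) * real (2 * s))"
      unfolding B_def by (simp add: powr_powr)
    also have "\<dots> = 1 / (2 * real n)" using assms by simp
    finally show ?thesis .
  qed
  have pb: "norm (p x y) \<le> 1 / (16 * real n)" if "norm x < 4 * d" "norm y < 4 * d" for x y
  proof -
    have "norm (p x y) \<le> m0 / (R / (8 * d)) ^ N"
    proof -
      have o: "\<And>i j. i + j < N \<Longrightarrow> c i j = 0" using order unfolding N_def by simp
      have Np: "N > 0" unfolding N_def by simp
      have r1: "0 < 4 * d" "norm x \<le> 4 * d" "norm y \<le> 4 * d" using dpos that by auto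
      have r2: "1 < R / (8 * d)" using dC dpos unfolding C_def by (simp add: field_simps)
      have r3: "R / (8 * d) * (4 * d) < R" using dpos assms by (simp add: field_simps)
      show ?thesis using schwarz_bound[OF o Np series bound r1 r2 r3] by simp
    qed
    also have "m0 / (R / (8 * d)) ^ N = m0 * 8^N * (d^(2 * s) * d) / R^N"
      unfolding N_def by (simp add: field_simps power_add power_mult_distrib)
    also have "\<dots> \<le> m0 * 8^N * (1 / (2 * real n) * A) / R^N"
      using assms dpos d2s dA
      by (intro divide_right_mono mult_left_mono mult_mono) auto
    also have "\<dots> = 1 / (16 * real n)"
    proof -
      have "(8::real)^N = (2^3)^N" by simp
      also have "\<dots> = 2^(3*N)" by (simp only: power_mult)
      also have "3*N = 6 * s + 3" unfolding N_def by simp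
      finally have "(8::real)^N = 2^(6 * s + 3)" .
      moreover have "(2::real)^(6 * s + 6) = 2^(6 * s + 3) * 8" by (simp add: power_add)
      ultimately show ?thesis unfolding A_def N_def using assms by (simp add: field_simps)
    qed
    finally show ?thesis .
  qed
  have main: "iter_defined_at \<alpha> s R p k z \<and> (phi \<alpha> s p ^^ k) z \<in> bidisc (4 * d)"
    if k: "1 \<le> k" "k \<le> n" and z: "z \<in> bidisc d" for k z
  proof -
    obtain x0 y0 where z0: "z = (x0, y0)" "norm x0 < d" "norm y0 < d"
      using z unfolding bidisc_def by auto
    define Z where "Z j = (phi \<alpha> s p ^^ j) z" for j
    have e3: "exp (real j / real n) \<le> 3" if "j \<le> n" for j
    proof -
      have "real j / real n \<le> 1" using that assms by (simp add: field_simps)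
      then have "exp (real j / real n) \<le> exp 1" by simp
      then show ?thesis using exp_le by linarith
    qed
    have inv: "fst (Z j) * snd (Z j) = x0 * y0 \<and> norm (fst (Z j)) \<le> norm x0 * exp (real j / real n)
          \<and> norm (snd (Z j)) \<le> norm y0 * exp (real j / real n)" if "j \<le> n" for j
      using that
    proof (induction j)
      case 0
      then show ?case unfolding Z_def using z0 by simp
    next
      case (Suc j)
      then have IH: "fst (Z j) * snd (Z j) = x0 * y0" "norm (fst (Z j)) \<le> norm x0 * exp (real j / real n)"
          "norm (snd (Z j)) \<le> norm y0 * exp (real j / real n)" by auto
      define x where "x = fst (Z j)"
      define y where "y = snd (Z j)"
      have ZS: "Z (Suc j) = phi \<alpha> s p (x, y)" unfolding Z_def x_def y_def by simp
      have "norm x < 4 * d"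
      proof -
        have "norm x \<le> norm x0 * exp (real j / real n)" using IH x_def by simp
        also have "\<dots> \<le> norm x0 * 3" using e3[of j] Suc by (intro mult_left_mono) auto
        also have "\<dots> < 4 * d" using z0 dpos by simp
        finally show ?thesis .
      qed
      moreover have "norm y < 4 * d"
      proof -
        have "norm y \<le> norm y0 * exp (real j / real n)" using IH y_def by simp
        also have "\<dots> \<le> norm y0 * 3" using e3[of j] Suc by (intro mult_left_mono) auto
        also have "\<dots> < 4 * d" using z0 dpos by simp
        finally show ?thesis .
      qed
      ultimately have pxy: "norm (p x y) \<le> 1 / (16 * real n)" by (rule pb)
      have d12: "1 / (16 * real n) \<le> 1/2" using assms by (simp add: field_simps)
      have exy: "norm ((x * y)^s) \<le> 1 / (2 * real n)"
      proof -
        have "norm ((x * y)^s) = (norm x0 * norm y0)^s" using IH x_def y_def by (simp add: norm_mult norm_power)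
        also have "\<dots> \<le> (d * d)^s" using z0 dpos by (intro power_mono mult_mono) auto
        also have "\<dots> = d^(2 * s)" by (simp add: power_mult power2_eq_square[symmetric] power_mult_distrib)
        finally show ?thesis using d2s by linarith
      qed
      note st = phi_step[where p=p and x=x and y=y and s=s and \<alpha>=\<alpha>, OF pxy d12 exy]
      have ee: "exp (1 / (2 * real n) + 2 * (1 / (16 * real n))) \<le> exp (1 / real n)"
        using assms by (simp add: field_simps)
      have ee2: "exp (1 / (2 * real n) + (1 / (16 * real n))) \<le> exp (1 / real n)"
        using assms by (simp add: field_simps)
      have ej: "exp (real j / real n) * exp (1 / real n) = exp (real (Suc j) / real n)"
        by (simp add: exp_add[symmetric] add_divide_distrib)
      have "norm (fst (Z (Suc j))) \<le> norm x0 * exp (real (Suc j) / real n)"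
      proof -
        have "norm (fst (Z (Suc j))) \<le> norm x * exp (1 / real n)"
          using st(2) ee2 ZS by (smt (verit) mult_left_mono norm_ge_zero)
        also have "\<dots> \<le> norm x0 * exp (real j / real n) * exp (1 / real n)"
          using IH x_def by (intro mult_right_mono) auto
        finally show ?thesis using ej by (simp add: mult.assoc)
      qed
      moreover have "norm (snd (Z (Suc j))) \<le> norm y0 * exp (real (Suc j) / real n)"
      proof -
        have "norm (snd (Z (Suc j))) \<le> norm y * exp (1 / real n)"
          using st(3) ee ZS by (smt (verit) mult_left_mono norm_ge_zero)
        also have "\<dots> \<le> norm y0 * exp (real j / real n) * exp (1 / real n)"
          using IH y_def by (intro mult_right_mono) auto
        finally show ?thesis using ej by (simp add: mult.assoc)
      qed
      moreover have "fst (Z (Suc j)) * snd (Z (Suc j)) = x0 * y0"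
        using st(1) ZS IH x_def y_def by simp
      ultimately show ?case by simp
    qed
    have inb: "Z j \<in> bidisc (4 * d)" if "j \<le> n" for j
    proof -
      have "norm (fst (Z j)) \<le> norm x0 * 3" "norm (snd (Z j)) \<le> norm y0 * 3"
        using inv[OF that] e3[OF that] order_trans mult_left_mono norm_ge_zero by metis+
      then have "norm (fst (Z j)) < 4 * d" "norm (snd (Z j)) < 4 * d" using z0 dpos by linarith+
      then show ?thesis unfolding bidisc_def by (simp add: mem_Times_iff)
    qed
    have "phi_defined_at R p (Z j)" if "j < k" for j
    proof -
      have b: "Z j \<in> bidisc (4 * d)" using inb that k by simp
      then have "Z j \<in> bidisc R" using dC using dpos unfolding C_def bidisc_def by (auto simp: mem_Times_iff)
      moreover have "1 + p (fst (Z j)) (snd (Z j)) \<noteq> 0"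
      proof
        assume h: "1 + p (fst (Z j)) (snd (Z j)) = 0"
        have "norm (p (fst (Z j)) (snd (Z j))) \<le> 1 / (16 * real n)"
          using b pb unfolding bidisc_def by (auto simp: mem_Times_iff)
        moreover have "p (fst (Z j)) (snd (Z j)) = -1" using h by (simp add: add_eq_0_iff)
        ultimately show False using assms by (simp add: field_simps)
      qed
      ultimately show ?thesis unfolding phi_defined_at_def by simp
    qed
    then show ?thesis unfolding iter_defined_at_def using inb[of k] k Z_def by auto
  qed
  show ?thesis unfolding Let_def using main unfolding d_def A_def B_def C_def by blast
qed

end
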